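(* Let $X$ and $Y$ be topological spaces. If $C(X)$ has the countable sup property and $Y$ has calibre $\aleph_1$, then $C(X\times Y)$ has the countable sup property.
   Context: $C(Z)$ is the vector lattice of real-valued continuous functions on $Z$ with the pointwise order; $X\times Y$ has the product topology. A vector lattice has the countable sup property if every nonempty subset possessing a supremum contains a countable subset with the same supremum. $Y$ has calibre $\aleph_1$ if every uncountable family of nonempty open subsets of $Y$ contains an uncountable subfamily with nonempty intersection. *)

theory Defs
  imports "HOL-Analysis.Analysis"
begin

text \<open>C(Z): real-valued continuous functions on the space Z. Elements are
  represented by functions on the carrier type; only their values on
  topspace Z matter. The order is pointwise on topspace Z.\<close>

definition Cfun :: "'a topology \<Rightarrow> ('a \<Rightarrow> real) set" where
  "Cfun Z = {f. continuous_map Z euclideanreal f}"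

definition Cle :: "'a topology \<Rightarrow> ('a \<Rightarrow> real) \<Rightarrow> ('a \<Rightarrow> real) \<Rightarrow> bool" where
  "Cle Z f g \<longleftrightarrow> (\<forall>x\<in>topspace Z. f x \<le> g x)"

definition is_Csup :: "'a topology \<Rightarrow> ('a \<Rightarrow> real) set \<Rightarrow> ('a \<Rightarrow> real) \<Rightarrow> bool" where
  "is_Csup Z F s \<longleftrightarrow> s \<in> Cfun Z \<and> (\<forall>f\<in>F. Cle Z f s) \<and>
     (\<forall>u\<in>Cfun Z. (\<forall>f\<in>F. Cle Z f u) \<longrightarrow> Cle Z s u)"

definition countable_sup_property :: "'a topology \<Rightarrow> bool" where
  "countable_sup_property Z \<longleftrightarrow>
     (\<forall>F s. F \<subseteq> Cfun Z \<and> F \<noteq> {} \<and> is_Csup Z F s \<longrightarrow>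
        (\<exists>G. G \<subseteq> F \<and> countable G \<and> G \<noteq> {} \<and> is_Csup Z G s))"

definition calibre_aleph1 :: "'a topology \<Rightarrow> bool" where
  "calibre_aleph1 Y \<longleftrightarrow>
     (\<forall>\<U>. \<U> \<subseteq> {U. openin Y U \<and> U \<noteq> {}} \<and> uncountable \<U> \<longrightarrow>
        (\<exists>\<V>. \<V> \<subseteq> \<U> \<and> uncountable \<V> \<and> \<Inter>\<V> \<noteq> {}))"

end

theory Submission
  imports Defs
begin

definition dccc :: "'a topology \<Rightarrow> bool" where
  "dccc Z \<longleftrightarrow> (\<forall>H. H \<subseteq> Cfun Z \<and> (\<forall>h\<in>H. \<exists>x\<in>topspace Z. h x \<noteq> 0) \<and>
      (\<forall>h\<in>H. \<forall>k\<in>H. h \<noteq> k \<longrightarrow> (\<forall>x\<in>topspace Z. h x = 0 \<or> k x = 0)) \<longrightarrow> countable H)"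

lemma uncountable_fiber:
  assumes "uncountable A" "countable (f ` A)"
  shows "\<exists>a\<in>A. uncountable {x\<in>A. f x = f a}"
proof (rule ccontr)
  assume "\<not> ?thesis"
  then have "\<forall>b\<in>f ` A. countable {x\<in>A. f x = b}" by auto
  then have "countable (\<Union>b\<in>f ` A. {x\<in>A. f x = b})"
    using assms(2) by (intro countable_UN) auto
  moreover have "(\<Union>b\<in>f ` A. {x\<in>A. f x = b}) = A" by auto
  ultimately show False using assms(1) by simp
qed

lemma dccc_prod:
  assumes dX: "dccc X" and cY: "calibre_aleph1 Y"
  shows "dccc (prod_topology X Y)"
  unfolding dccc_def
proof (intro allI impI)
  fix H :: "('a \<times> 'b \<Rightarrow> real) set"
  assume a: "H \<subseteq> Cfun (prod_topology X Y) \<and> (\<forall>h\<in>H. \<exists>x\<in>topspace (prod_topology X Y). h x \<noteq> 0) \<and>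
      (\<forall>h\<in>H. \<forall>k\<in>H. h \<noteq> k \<longrightarrow> (\<forall>x\<in>topspace (prod_topology X Y). h x = 0 \<or> k x = 0))"
  have Hc: "\<And>h. h \<in> H \<Longrightarrow> continuous_map (prod_topology X Y) euclideanreal h"
    using a unfolding Cfun_def by auto
  have Hne: "\<forall>h\<in>H. \<exists>x\<in>topspace (prod_topology X Y). h x \<noteq> 0"
    using a by (elim conjE)
  have Hd: "\<And>h k x. h \<in> H \<Longrightarrow> k \<in> H \<Longrightarrow> h \<noteq> k \<Longrightarrow> x \<in> topspace (prod_topology X Y) \<Longrightarrow> h x = 0 \<or> k x = 0"
  proof -
    fix h k x assume "h \<in> H" "k \<in> H" "h \<noteq> k" "x \<in> topspace (prod_topology X Y)"
    moreover have "\<forall>h\<in>H. \<forall>k\<in>H. h \<noteq> k \<longrightarrow> (\<forall>x\<in>topspace (prod_topology X Y). h x = 0 \<or> k x = 0)"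
      using a by (elim conjE)
    ultimately show "h x = 0 \<or> k x = 0" by blast
  qed
  obtain p where p: "\<And>h. h \<in> H \<Longrightarrow> p h \<in> topspace (prod_topology X Y) \<and> h (p h) \<noteq> 0"
    using bchoice[of H "\<lambda>h x. x \<in> topspace (prod_topology X Y) \<and> h x \<noteq> 0"] Hne by blast
  define B where "B h = {y \<in> topspace Y. h (fst (p h), y) \<noteq> 0}" for h
  have Bopen: "openin Y (B h)" if "h \<in> H" for h
  proof -
    have "fst (p h) \<in> topspace X" using p[OF that] by auto
    then have "continuous_map Y (prod_topology X Y) (\<lambda>y. (fst (p h), y))"
      by (intro continuous_map_pairedI) auto
    then have "continuous_map Y euclideanreal (h \<circ> (\<lambda>y. (fst (p h), y)))"
      using Hc[OF that] by (rule continuous_map_compose)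
    then have "openin Y {y \<in> topspace Y. (h \<circ> (\<lambda>y. (fst (p h), y))) y \<in> - {0}}"
      by (rule openin_continuous_map_preimage) auto
    then show ?thesis unfolding B_def by simp
  qed
  have Bne: "snd (p h) \<in> B h" if "h \<in> H" for h
    using p[OF that] unfolding B_def by (cases "p h") auto
  show "countable H"
  proof (rule ccontr)
    assume unc: "uncountable H"
    obtain H' y where H': "H' \<subseteq> H" "uncountable H'" "y \<in> topspace Y" "\<And>h. h \<in> H' \<Longrightarrow> y \<in> B h"
    proof (cases "countable (B ` H)")
      case True
      then obtain h0 where h0: "h0 \<in> H" "uncountable {x\<in>H. B x = B h0}"
        using uncountable_fiber[OF unc] by blast
      show ?thesis
        apply (rule that[of "{x\<in>H. B x = B h0}" "snd (p h0)"])
        using h0 Bne[OF h0(1)] by (auto simp: B_def)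
    next
      case False
      have "B ` H \<subseteq> {U. openin Y U \<and> U \<noteq> {}}" using Bopen Bne by auto
      then have "\<exists>V. V \<subseteq> B ` H \<and> uncountable V \<and> \<Inter>V \<noteq> {}"
        using cY[unfolded calibre_aleph1_def, rule_format, of "B ` H"] False by simp
      then obtain V where V: "V \<subseteq> B ` H" "uncountable V" "\<Inter>V \<noteq> {}"
        by (elim exE conjE)
      then obtain y where y: "y \<in> \<Inter>V" by blast
      obtain v where v: "v \<in> V" using V(2) by (metis countable_empty ex_in_conv)
      have "V \<subseteq> B ` {h\<in>H. B h \<in> V}" using V(1) by auto
      then have "uncountable {h\<in>H. B h \<in> V}" using V(2) countable_image countable_subset by metis
      moreover have "y \<in> topspace Y" using y v V(1) by (auto simp: B_def)
      ultimately show ?thesis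
        by (intro that[of "{h\<in>H. B h \<in> V}" y]) (use y in auto)
    qed
    define k where "k h = (\<lambda>x. h (x, y))" for h :: "'a \<times> 'b \<Rightarrow> real"
    have kpt: "k h (fst (p h)) \<noteq> 0 \<and> fst (p h) \<in> topspace X" if "h \<in> H'" for h
    proof -
      have "h \<in> H" using H'(1) that by blast
      then have "p h \<in> topspace X \<times> topspace Y" using p by simp
      then show ?thesis using H'(4)[OF that] unfolding B_def k_def by (cases "p h") auto
    qed
    have inj: "inj_on k H'"
    proof (rule inj_onI)
      fix h h' assume hh: "h \<in> H'" "h' \<in> H'" "k h = k h'"
      show "h = h'"
      proof (rule ccontr)
        assume "h \<noteq> h'"
        then have "h (fst (p h), y) = 0 \<or> h' (fst (p h), y) = 0"
          using Hd[of h h' "(fst (p h), y)"] hh H' kpt[OF hh(1)] by auto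
        moreover have "h' (fst (p h), y) = h (fst (p h), y)"
          using fun_cong[OF hh(3), of "fst (p h)"] unfolding k_def by simp
        ultimately show False using kpt[OF hh(1)] unfolding k_def by auto
      qed
    qed
    have cond: "k ` H' \<subseteq> Cfun X \<and> (\<forall>h\<in>k ` H'. \<exists>x\<in>topspace X. h x \<noteq> 0) \<and>
        (\<forall>h\<in>k ` H'. \<forall>k'\<in>k ` H'. h \<noteq> k' \<longrightarrow> (\<forall>x\<in>topspace X. h x = 0 \<or> k' x = 0))"
      proof (intro conjI ballI impI subsetI)
        fix g assume "g \<in> k ` H'"
        then obtain h where h: "h \<in> H'" "g = k h" by blast
        have "continuous_map X (prod_topology X Y) (\<lambda>x. (x, y))"
          using H'(3) by (intro continuous_map_pairedI) auto
        then have "continuous_map X euclideanreal (h \<circ> (\<lambda>x. (x, y)))"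
          using Hc h H'(1) by (intro continuous_map_compose) auto
        then show "g \<in> Cfun X" using h by (simp add: Cfun_def k_def o_def)
      next
        fix g assume "g \<in> k ` H'"
        then obtain h where h: "h \<in> H'" "g = k h" by blast
        then show "\<exists>x\<in>topspace X. g x \<noteq> 0" using kpt by blast
      next
        fix g g' x assume "g \<in> k ` H'" "g' \<in> k ` H'" "g \<noteq> g'" "x \<in> topspace X"
        then obtain h h' where "h \<in> H'" "h' \<in> H'" "g = k h" "g' = k h'" "h \<noteq> h'" by blast
        then show "g x = 0 \<or> g' x = 0"
          using Hd[of h h' "(x, y)"] H' \<open>x \<in> topspace X\<close> by (auto simp: k_def)
      qed
    have "countable (k ` H')"
      using dX[unfolded dccc_def, rule_format, OF cond] .
    then have "countable H'" using inj countable_image_inj_on by blast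
    then show False using H'(2) by simp
  qed
qed

lemma dccc_csp:
  assumes d: "dccc Z"
  shows "countable_sup_property Z"
  unfolding countable_sup_property_def
proof (intro allI impI)
  fix F s assume a: "F \<subseteq> Cfun Z \<and> F \<noteq> {} \<and> is_Csup Z F s"
  have FC: "\<And>f. f \<in> F \<Longrightarrow> continuous_map Z euclideanreal f" using a by (auto simp: Cfun_def)
  have Fne: "F \<noteq> {}" using a by simp
  have sc: "continuous_map Z euclideanreal s" using a by (simp add: is_Csup_def Cfun_def)
  have ub: "\<And>f x. f \<in> F \<Longrightarrow> x \<in> topspace Z \<Longrightarrow> f x \<le> s x"
    using a by (simp add: is_Csup_def Cle_def)
  have least: "\<And>u. continuous_map Z euclideanreal u \<Longrightarrow> (\<And>f x. f \<in> F \<Longrightarrow> x \<in> topspace Z \<Longrightarrow> f x \<le> u x)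
      \<Longrightarrow> x \<in> topspace Z \<Longrightarrow> s x \<le> u x" for x
    using a unfolding is_Csup_def Cle_def Cfun_def by (metis mem_Collect_eq)
  define V where "V n = {M. M \<subseteq> Cfun Z \<and> (\<forall>h\<in>M. \<exists>x\<in>topspace Z. h x \<noteq> 0) \<and>
      (\<forall>h\<in>M. \<forall>k\<in>M. h \<noteq> k \<longrightarrow> (\<forall>x\<in>topspace Z. h x = 0 \<or> k x = 0)) \<and>
      (\<forall>h\<in>M. \<exists>f\<in>F. \<forall>x\<in>topspace Z. h x \<noteq> 0 \<longrightarrow> s x - inverse (real (Suc n)) < f x)}" for n :: nat
  have ZL: "\<exists>M\<in>V n. \<forall>M'\<in>V n. M \<subseteq> M' \<longrightarrow> M' = M" for n
  proof (rule Zorn_Lemma, rule ballI)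
    fix C assume C: "C \<in> chains (V n)"
    then have CV: "C \<subseteq> V n" unfolding chains_def by simp
    have ch: "\<And>A B. A \<in> C \<Longrightarrow> B \<in> C \<Longrightarrow> A \<subseteq> B \<or> B \<subseteq> A"
      using C unfolding chains_def chain_subset_def by simp
    have P: "A \<subseteq> Cfun Z \<and> (\<forall>h\<in>A. \<exists>x\<in>topspace Z. h x \<noteq> 0) \<and>
      (\<forall>h\<in>A. \<forall>k\<in>A. h \<noteq> k \<longrightarrow> (\<forall>x\<in>topspace Z. h x = 0 \<or> k x = 0)) \<and>
      (\<forall>h\<in>A. \<exists>f\<in>F. \<forall>x\<in>topspace Z. h x \<noteq> 0 \<longrightarrow> s x - inverse (real (Suc n)) < f x)"
      if "A \<in> C" for A
    proof -
      have "A \<in> V n" by (rule subsetD[OF CV that])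
      then show ?thesis unfolding V_def mem_Collect_eq .
    qed
    have P1: "\<And>A. A \<in> C \<Longrightarrow> A \<subseteq> Cfun Z"
    proof -
      fix A assume "A \<in> C"
      then show "A \<subseteq> Cfun Z" using P[OF \<open>A \<in> C\<close>] by (elim conjE)
    qed
    have P2: "\<And>A h. A \<in> C \<Longrightarrow> h \<in> A \<Longrightarrow> \<exists>x\<in>topspace Z. h x \<noteq> 0"
    proof -
      fix A h assume "A \<in> C" "h \<in> A"
      have "\<forall>h\<in>A. \<exists>x\<in>topspace Z. h x \<noteq> 0" using P[OF \<open>A \<in> C\<close>] by (elim conjE)
      then show "\<exists>x\<in>topspace Z. h x \<noteq> 0" using \<open>h \<in> A\<close> by (rule bspec)
    qed
    have P3: "\<And>A h k x. A \<in> C \<Longrightarrow> h \<in> A \<Longrightarrow> k \<in> A \<Longrightarrow> h \<noteq> k \<Longrightarrow> x \<in> topspace Z \<Longrightarrow> h x = 0 \<or> k x = 0"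
    proof -
      fix A h k x assume as: "A \<in> C" "h \<in> A" "k \<in> A" "h \<noteq> k" "x \<in> topspace Z"
      have "\<forall>h\<in>A. \<forall>k\<in>A. h \<noteq> k \<longrightarrow> (\<forall>x\<in>topspace Z. h x = 0 \<or> k x = 0)" using P[OF as(1)] by (elim conjE)
      then show "h x = 0 \<or> k x = 0" using as(2-5) by simp
    qed
    have P4: "\<And>A h. A \<in> C \<Longrightarrow> h \<in> A \<Longrightarrow> \<exists>f\<in>F. \<forall>x\<in>topspace Z. h x \<noteq> 0 \<longrightarrow> s x - inverse (real (Suc n)) < f x"
    proof -
      fix A h assume "A \<in> C" "h \<in> A"
      have "\<forall>h\<in>A. \<exists>f\<in>F. \<forall>x\<in>topspace Z. h x \<noteq> 0 \<longrightarrow> s x - inverse (real (Suc n)) < f x" using P[OF \<open>A \<in> C\<close>] by (elim conjE)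
      then show "\<exists>f\<in>F. \<forall>x\<in>topspace Z. h x \<noteq> 0 \<longrightarrow> s x - inverse (real (Suc n)) < f x" using \<open>h \<in> A\<close> by (rule bspec)
    qed
    show "\<Union>C \<in> V n"
      unfolding V_def mem_Collect_eq
    proof (intro conjI ballI impI)
      show "\<Union>C \<subseteq> Cfun Z" using P1 by (rule Union_least)
    next
      fix h assume "h \<in> \<Union>C"
      then obtain A where "A \<in> C" "h \<in> A" by (rule UnionE)
      then show "\<exists>x\<in>topspace Z. h x \<noteq> 0" by (rule P2)
    next
      fix h assume "h \<in> \<Union>C"
      then obtain A where "A \<in> C" "h \<in> A" by (rule UnionE)
      then show "\<exists>f\<in>F. \<forall>x\<in>topspace Z. h x \<noteq> 0 \<longrightarrow> s x - inverse (real (Suc n)) < f x" by (rule P4)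
    next
      fix h k x assume hk: "h \<in> \<Union>C" "k \<in> \<Union>C" "h \<noteq> k" "x \<in> topspace Z"
      obtain A where A: "A \<in> C" "h \<in> A" using hk(1) by (rule UnionE)
      obtain B where B: "B \<in> C" "k \<in> B" using hk(2) by (rule UnionE)
      show "h x = 0 \<or> k x = 0"
      proof (cases "A \<subseteq> B")
        case True
        have "h \<in> B" using True A(2) by (rule subsetD)
        show ?thesis by (rule P3[OF B(1) \<open>h \<in> B\<close> B(2) hk(3,4)])
      next
        case False then have "B \<subseteq> A" using ch[OF A(1) B(1)] by simp
        then have "k \<in> A" using B(2) by (rule subsetD)
        show ?thesis by (rule P3[OF A(1) A(2) \<open>k \<in> A\<close> hk(3,4)])
      qed
    qed
  qed
  define Mx where "Mx n = (SOME M. M \<in> V n \<and> (\<forall>M'\<in>V n. M \<subseteq> M' \<longrightarrow> M' = M))" for n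
  have Mx0: "Mx n \<in> V n \<and> (\<forall>M'\<in>V n. Mx n \<subseteq> M' \<longrightarrow> M' = Mx n)" for n
    unfolding Mx_def by (rule someI_ex[OF ZL[of n, unfolded Bex_def]])
  have Mx1: "Mx n \<in> V n" for n by (rule conjunct1[OF Mx0])
  have Mx2: "M' = Mx n" if "M' \<in> V n" "Mx n \<subseteq> M'" for n M'
  proof -
    have "\<forall>M'\<in>V n. Mx n \<subseteq> M' \<longrightarrow> M' = Mx n" by (rule conjunct2[OF Mx0])
    then show ?thesis using that by blast
  qed
  have MxP: "Mx n \<subseteq> Cfun Z \<and> (\<forall>h\<in>Mx n. \<exists>x\<in>topspace Z. h x \<noteq> 0) \<and>
      (\<forall>h\<in>Mx n. \<forall>k\<in>Mx n. h \<noteq> k \<longrightarrow> (\<forall>x\<in>topspace Z. h x = 0 \<or> k x = 0)) \<and>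
      (\<forall>h\<in>Mx n. \<exists>f\<in>F. \<forall>x\<in>topspace Z. h x \<noteq> 0 \<longrightarrow> s x - inverse (real (Suc n)) < f x)" for n
    using Mx1[of n] unfolding V_def mem_Collect_eq .
  have MxP1: "Mx n \<subseteq> Cfun Z" for n using MxP[of n] by (elim conjE)
  have MxP2: "\<forall>h\<in>Mx n. \<exists>x\<in>topspace Z. h x \<noteq> 0" for n using MxP[of n] by (elim conjE)
  have MxP3: "\<forall>h\<in>Mx n. \<forall>k\<in>Mx n. h \<noteq> k \<longrightarrow> (\<forall>x\<in>topspace Z. h x = 0 \<or> k x = 0)" for n
    using MxP[of n] by (elim conjE)
  have MxP4: "\<forall>h\<in>Mx n. \<exists>f\<in>F. \<forall>x\<in>topspace Z. h x \<noteq> 0 \<longrightarrow> s x - inverse (real (Suc n)) < f x" for n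
    using MxP[of n] by (elim conjE)
  have Mcount: "countable (Mx n)" for n
    by (rule d[unfolded dccc_def, rule_format], intro conjI, rule MxP1, rule MxP2, rule MxP3)
  have ex: "\<exists>f. f \<in> F \<and> (\<forall>x\<in>topspace Z. h x \<noteq> 0 \<longrightarrow> s x - inverse (real (Suc n)) < f x)"
    if "h \<in> Mx n" for n h
    using MxP4[of n] that by blast
  define fh where "fh n h = (SOME f. f \<in> F \<and> (\<forall>x\<in>topspace Z. (h x :: real) \<noteq> 0 \<longrightarrow> s x - inverse (real (Suc n)) < f x))" for n h
  have fh0: "fh n h \<in> F \<and> (\<forall>x\<in>topspace Z. h x \<noteq> 0 \<longrightarrow> s x - inverse (real (Suc n)) < fh n h x)"
    if "h \<in> Mx n" for n h
    unfolding fh_def by (rule someI_ex[OF ex[OF that]])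
  have fh: "\<And>n h. h \<in> Mx n \<Longrightarrow> fh n h \<in> F"
    "\<And>n h x. h \<in> Mx n \<Longrightarrow> x \<in> topspace Z \<Longrightarrow> h x \<noteq> 0 \<Longrightarrow> s x - inverse (real (Suc n)) < fh n h x"
    using fh0 by blast+
  obtain f0 where f0: "f0 \<in> F" using Fne by blast
  define G where "G = insert f0 (\<Union>n. fh n ` Mx n)"
  have GF: "G \<subseteq> F" using f0 fh(1) unfolding G_def by blast
  have Gc: "countable G" unfolding G_def using Mcount by (intro countable_insert countable_UN countable_image) auto
  have Gsup: "is_Csup Z G s"
    unfolding is_Csup_def
  proof (intro conjI ballI impI)
    show "s \<in> Cfun Z" using sc by (simp add: Cfun_def)
  next
    fix f assume "f \<in> G" then show "Cle Z f s" using GF ub unfolding Cle_def by blast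
  next
    fix u assume uC: "u \<in> Cfun Z" and ubG: "\<forall>f\<in>G. Cle Z f u"
    have uc: "continuous_map Z euclideanreal u" using uC by (simp add: Cfun_def)
    show "Cle Z s u" unfolding Cle_def
    proof (rule ballI, rule ccontr)
      fix z0 assume z0: "z0 \<in> topspace Z" and nle: "\<not> s z0 \<le> u z0"
      define \<delta> where "\<delta> = s z0 - u z0"
      have dpos: "\<delta> > 0" using nle unfolding \<delta>_def by simp
      obtain n where n: "inverse (real (Suc n)) < \<delta> / 2" using reals_Archimedean[of "\<delta>/2"] dpos by auto
      define e where "e = inverse (real (Suc n))"
      have epos: "e > 0" unfolding e_def by simp
      define w where "w z = max 0 (s z - u z - \<delta> / 2)" for z
      have wc: "continuous_map Z euclideanreal w"
        unfolding w_def using sc uc by (intro continuous_intros) auto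
      have "\<exists>f\<in>F. \<exists>z1\<in>topspace Z. w z1 > 0 \<and> s z1 - e < f z1"
      proof (rule ccontr)
        assume "\<not> ?thesis"
        then have nb: "\<And>f z. f \<in> F \<Longrightarrow> z \<in> topspace Z \<Longrightarrow> w z > 0 \<Longrightarrow> f z \<le> s z - e"
          by (meson not_le)
        define u' where "u' z = s z - min e (w z)" for z
        have u'c: "continuous_map Z euclideanreal u'"
          unfolding u'_def using sc wc by (intro continuous_intros) auto
        have "s z0 \<le> u' z0"
        proof (rule least[OF u'c _ z0])
          fix f x assume fx: "f \<in> F" "x \<in> topspace Z"
          show "f x \<le> u' x"
          proof (cases "w x > 0")
            case True then show ?thesis using nb[OF fx True] unfolding u'_def by linarith
          next
            case False then have "w x = 0" unfolding w_def by linarith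
            then show ?thesis using ub[OF fx] epos unfolding u'_def by simp
          qed
        qed
        moreover have "w z0 > 0" unfolding w_def \<delta>_def using dpos \<delta>_def by simp
        ultimately show False using epos unfolding u'_def by simp
      qed
      then obtain f z1 where fz1: "f \<in> F" "z1 \<in> topspace Z" "w z1 > 0" "s z1 - e < f z1" by blast
      define k where "k z = min (w z) (max 0 (f z - s z + e))" for z
      have kc: "continuous_map Z euclideanreal k"
        unfolding k_def using sc wc FC[OF fz1(1)] by (intro continuous_intros) auto
      have kz1: "k z1 \<noteq> 0" using fz1 unfolding k_def by simp
      have kpos: "k z \<noteq> 0 \<Longrightarrow> w z > 0 \<and> s z - e < f z" for z
        unfolding k_def w_def by (auto simp: min_def max_def split: if_splits)
      have "\<exists>h\<in>Mx n. \<exists>z2\<in>topspace Z. h z2 \<noteq> 0 \<and> k z2 \<noteq> 0"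
      proof (rule ccontr)
        assume nm: "\<not> ?thesis"
        have "insert k (Mx n) \<in> V n"
          unfolding V_def mem_Collect_eq
        proof (intro conjI)
          show "insert k (Mx n) \<subseteq> Cfun Z" using MxP1[of n] kc unfolding Cfun_def by blast
          show "\<forall>h\<in>insert k (Mx n). \<exists>x\<in>topspace Z. h x \<noteq> 0"
            using MxP2[of n] kz1 fz1(2) by blast
          show "\<forall>h\<in>insert k (Mx n). \<forall>k'\<in>insert k (Mx n). h \<noteq> k' \<longrightarrow> (\<forall>x\<in>topspace Z. h x = 0 \<or> k' x = 0)"
          proof (intro ballI impI)
            fix h k' x assume hk: "h \<in> insert k (Mx n)" "k' \<in> insert k (Mx n)" "h \<noteq> k'" "x \<in> topspace Z"
            have old: "\<forall>h\<in>Mx n. \<forall>k\<in>Mx n. h \<noteq> k \<longrightarrow> (\<forall>x\<in>topspace Z. h x = 0 \<or> k x = 0)"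
              using MxP3[of n] .
            show "h x = 0 \<or> k' x = 0"
            proof (cases "h = k")
              case True then have "k' \<in> Mx n" using hk by auto
              then show ?thesis using nm hk(4) True by blast
            next
              case False note hnk = False
              then have hM: "h \<in> Mx n" using hk by auto
              show ?thesis
              proof (cases "k' = k")
                case True then show ?thesis using nm hk(4) hM by blast
              next
                case False then have "k' \<in> Mx n" using hk by auto
                then show ?thesis using old hM hk by blast
              qed
            qed
          qed
          show "\<forall>h\<in>insert k (Mx n). \<exists>f\<in>F. \<forall>x\<in>topspace Z. h x \<noteq> 0 \<longrightarrow> s x - inverse (real (Suc n)) < f x"
          proof
            fix h assume "h \<in> insert k (Mx n)"
            then show "\<exists>f\<in>F. \<forall>x\<in>topspace Z. h x \<noteq> 0 \<longrightarrow> s x - inverse (real (Suc n)) < f x"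
            proof
              assume "h = k"
              then show ?thesis using fz1(1) kpos unfolding e_def by blast
            next
              assume "h \<in> Mx n"
              then show ?thesis using MxP4[of n] by blast
            qed
          qed
        qed
        then have "insert k (Mx n) = Mx n" by (rule Mx2) blast
        then have "k \<in> Mx n" by blast
        then show False using nm kz1 fz1(2) by blast
      qed
      then obtain h z2 where hz2: "h \<in> Mx n" "z2 \<in> topspace Z" "h z2 \<noteq> 0" "k z2 \<noteq> 0" by blast
      have g: "fh n h \<in> G" using hz2(1) unfolding G_def by blast
      have c1: "s z2 - e < fh n h z2" using fh(2)[OF hz2(1-3)] unfolding e_def .
      have "w z2 > 0" using kpos hz2(4) by blast
      then have c2: "s z2 - u z2 > \<delta>/2" unfolding w_def by simp
      have c3: "fh n h z2 \<le> u z2" using ubG g hz2(2) unfolding Cle_def by blast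
      show False using c1 c2 c3 n unfolding e_def by linarith
    qed
  qed
  show "\<exists>G. G \<subseteq> F \<and> countable G \<and> G \<noteq> {} \<and> is_Csup Z G s"
    using GF Gc Gsup unfolding G_def by blast
qed

lemma csp_dccc:
  assumes c: "countable_sup_property X"
  shows "dccc X"
  unfolding dccc_def
proof (intro allI impI)
  fix H :: "('a \<Rightarrow> real) set"
  assume a: "H \<subseteq> Cfun X \<and> (\<forall>h\<in>H. \<exists>x\<in>topspace X. h x \<noteq> 0) \<and>
      (\<forall>h\<in>H. \<forall>k\<in>H. h \<noteq> k \<longrightarrow> (\<forall>x\<in>topspace X. h x = 0 \<or> k x = 0))"
  have Hc: "\<And>h. h \<in> H \<Longrightarrow> continuous_map X euclideanreal h"
    using a unfolding Cfun_def by auto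
  have Hne: "\<forall>h\<in>H. \<exists>x\<in>topspace X. h x \<noteq> 0"
    using a by (elim conjE)
  have Hd0: "\<forall>h\<in>H. \<forall>k\<in>H. h \<noteq> k \<longrightarrow> (\<forall>x\<in>topspace X. h x = 0 \<or> k x = 0)"
    using a by (elim conjE)
  have Hd: "\<And>h k x. h \<in> H \<Longrightarrow> k \<in> H \<Longrightarrow> h \<noteq> k \<Longrightarrow> x \<in> topspace X \<Longrightarrow> h x = 0 \<or> k x = 0"
    using Hd0 by blast
  define F where "F = {g. continuous_map X euclideanreal g \<and> (\<forall>x\<in>topspace X. 0 \<le> g x \<and> g x \<le> 1) \<and>
     ((\<exists>h\<in>H. \<forall>x\<in>topspace X. g x \<noteq> 0 \<longrightarrow> h x \<noteq> 0) \<or> (\<forall>h\<in>H. \<forall>x\<in>topspace X. g x \<noteq> 0 \<longrightarrow> h x = 0))}"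
  define one where "one = (\<lambda>x::'a. 1::real)"
  have zF: "(\<lambda>x. 0) \<in> F" unfolding F_def by simp
  have FC: "F \<subseteq> Cfun X" unfolding F_def Cfun_def by blast
  have sup1: "is_Csup X F one"
    unfolding is_Csup_def
  proof (intro conjI ballI impI)
    show "one \<in> Cfun X" unfolding one_def Cfun_def by simp
  next
    fix g assume "g \<in> F" then show "Cle X g one" unfolding F_def Cle_def one_def by simp
  next
    fix u assume uC: "u \<in> Cfun X" and ub: "\<forall>f\<in>F. Cle X f u"
    have uc: "continuous_map X euclideanreal u" using uC by (simp add: Cfun_def)
    show "Cle X one u" unfolding Cle_def one_def
    proof (rule ballI, rule ccontr)
      fix x0 assume x0: "x0 \<in> topspace X" and nle: "\<not> 1 \<le> u x0"
      define v where "v x = max 0 (1 - u x)" for x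
      have vc: "continuous_map X euclideanreal v" unfolding v_def using uc by (intro continuous_intros) auto
      have v0: "v x \<ge> 0" for x unfolding v_def by simp
      have vpos: "v x \<noteq> 0 \<Longrightarrow> u x < 1" for x unfolding v_def by (auto simp: max_def split: if_splits)
      show False
      proof (cases "\<exists>h\<in>H. \<exists>x1\<in>topspace X. h x1 \<noteq> 0 \<and> v x1 \<noteq> 0")
        case True
        then obtain h x1 where hx1: "h \<in> H" "x1 \<in> topspace X" "h x1 \<noteq> 0" "v x1 \<noteq> 0" by blast
        define c where "c = min \<bar>h x1\<bar> (v x1)"
        have cpos: "c > 0" unfolding c_def using hx1 v0[of x1] by auto
        define g where "g x = min 1 ((1 / c) * min \<bar>h x\<bar> (v x))" for x
        have gF: "g \<in> F" unfolding F_def mem_Collect_eq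
        proof (intro conjI)
          show "continuous_map X euclideanreal g" unfolding g_def using Hc[OF hx1(1)] vc
            by (intro continuous_intros) auto
          show "\<forall>x\<in>topspace X. 0 \<le> g x \<and> g x \<le> 1" unfolding g_def using cpos v0 by auto
          show "(\<exists>h\<in>H. \<forall>x\<in>topspace X. g x \<noteq> 0 \<longrightarrow> h x \<noteq> 0) \<or> (\<forall>h\<in>H. \<forall>x\<in>topspace X. g x \<noteq> 0 \<longrightarrow> h x = 0)"
          proof (rule disjI1, rule bexI[OF _ hx1(1)], intro ballI impI)
            fix x assume "x \<in> topspace X" "g x \<noteq> 0"
            show "h x \<noteq> 0"
            proof
              assume "h x = 0"
              then have "g x = 0" unfolding g_def using v0[of x] by simp
              then show False using \<open>g x \<noteq> 0\<close> by simp
            qed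
          qed
        qed
        have "g x1 = 1" unfolding g_def c_def[symmetric] using cpos by simp
        moreover have "g x1 \<le> u x1" using ub gF hx1(2) unfolding Cle_def by blast
        ultimately show False using vpos[OF hx1(4)] by simp
      next
        case False
        then have nh: "\<And>h x. h \<in> H \<Longrightarrow> x \<in> topspace X \<Longrightarrow> v x \<noteq> 0 \<Longrightarrow> h x = 0" by blast
        have cpos: "v x0 > 0" unfolding v_def using nle by simp
        define g where "g x = min 1 ((1 / v x0) * v x)" for x
        have gF: "g \<in> F" unfolding F_def mem_Collect_eq
        proof (intro conjI)
          show "continuous_map X euclideanreal g" unfolding g_def using vc
            by (intro continuous_intros) auto
          show "\<forall>x\<in>topspace X. 0 \<le> g x \<and> g x \<le> 1" unfolding g_def using cpos v0 by auto
          show "(\<exists>h\<in>H. \<forall>x\<in>topspace X. g x \<noteq> 0 \<longrightarrow> h x \<noteq> 0) \<or> (\<forall>h\<in>H. \<forall>x\<in>topspace X. g x \<noteq> 0 \<longrightarrow> h x = 0)"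
          proof (rule disjI2, intro ballI impI)
            fix h x assume hx: "h \<in> H" "x \<in> topspace X" "g x \<noteq> 0"
            have "v x \<noteq> 0"
            proof
              assume "v x = 0" then have "g x = 0" unfolding g_def by simp
              then show False using hx(3) by simp
            qed
            then show "h x = 0" by (rule nh[OF hx(1,2)])
          qed
        qed
        have "g x0 = 1" unfolding g_def using cpos by simp
        moreover have "g x0 \<le> u x0" using ub gF x0 unfolding Cle_def by blast
        ultimately show False using nle by simp
      qed
    qed
  qed
  have "F \<subseteq> Cfun X \<and> F \<noteq> {} \<and> is_Csup X F one" using FC zF sup1 by blast
  then have "\<exists>G. G \<subseteq> F \<and> countable G \<and> G \<noteq> {} \<and> is_Csup X G one"
    by (rule c[unfolded countable_sup_property_def, rule_format])
  then obtain G where G: "G \<subseteq> F" "countable G" "is_Csup X G one" by blast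
  define hg where "hg g = (SOME h. h \<in> H \<and> (\<forall>x\<in>topspace X. g x \<noteq> 0 \<longrightarrow> h x \<noteq> 0))" for g :: "'a \<Rightarrow> real"
  have "H \<subseteq> hg ` G"
  proof
    fix h assume hH: "h \<in> H"
    show "h \<in> hg ` G"
    proof (rule ccontr)
      assume nh: "h \<notin> hg ` G"
      define u where "u x = 1 - min 1 \<bar>h x\<bar>" for x
      have uc: "continuous_map X euclideanreal u" unfolding u_def using Hc[OF hH]
        by (intro continuous_intros) auto
      have ubG: "\<forall>g\<in>G. Cle X g u"
        unfolding Cle_def
      proof (intro ballI)
        fix g x assume gG: "g \<in> G" and x: "x \<in> topspace X"
        have gF: "g \<in> F" using G(1) gG by blast
        have g01': "\<forall>x\<in>topspace X. 0 \<le> g x \<and> g x \<le> 1"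
          using gF[unfolded F_def mem_Collect_eq] by (elim conjE)
        then have g01: "0 \<le> g x \<and> g x \<le> 1" using x by (rule bspec)
        have alt: "(\<exists>h\<in>H. \<forall>x\<in>topspace X. g x \<noteq> 0 \<longrightarrow> h x \<noteq> 0) \<or> (\<forall>h\<in>H. \<forall>x\<in>topspace X. g x \<noteq> 0 \<longrightarrow> h x = 0)"
          using gF[unfolded F_def mem_Collect_eq] by (elim conjE)
        show "g x \<le> u x"
        proof (cases "g x = 0")
          case True then show ?thesis unfolding u_def by simp
        next
          case gnz: False
          have "h x = 0"
          proof (cases "\<exists>h\<in>H. \<forall>x\<in>topspace X. g x \<noteq> 0 \<longrightarrow> h x \<noteq> 0")
            case True
            then have "\<exists>h. h \<in> H \<and> (\<forall>x\<in>topspace X. g x \<noteq> 0 \<longrightarrow> h x \<noteq> 0)" by blast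
            then have hgp: "hg g \<in> H \<and> (\<forall>x\<in>topspace X. g x \<noteq> 0 \<longrightarrow> hg g x \<noteq> 0)"
              unfolding hg_def by (rule someI_ex)
            have "hg g \<noteq> h" using nh gG by blast
            then have "hg g x = 0 \<or> h x = 0" using Hd[OF conjunct1[OF hgp] hH _ x] by blast
            moreover have "hg g x \<noteq> 0" using hgp gnz x by blast
            ultimately show ?thesis by simp
          next
            case False
            then have "\<forall>h\<in>H. \<forall>x\<in>topspace X. g x \<noteq> 0 \<longrightarrow> h x = 0" using alt by (simp only: simp_thms)
            then show ?thesis using hH x gnz by blast
          qed
          then show ?thesis using g01 unfolding u_def by simp
        qed
      qed
      have "u \<in> Cfun X" using uc by (simp add: Cfun_def)
      moreover have "\<forall>u\<in>Cfun X. (\<forall>f\<in>G. Cle X f u) \<longrightarrow> Cle X one u"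
        using G(3) unfolding is_Csup_def by (elim conjE)
      ultimately have "Cle X one u" using ubG by blast
      moreover obtain x where x: "x \<in> topspace X" "h x \<noteq> 0" using Hne hH by blast
      ultimately have "1 \<le> u x" unfolding Cle_def one_def by blast
      then show False using x(2) unfolding u_def by (simp add: min_def split: if_splits)
    qed
  qed
  then show "countable H" by (rule countable_subset) (rule countable_image[OF G(2)])
qed

theorem theorem6p2:
  fixes X :: "'a topology" and Y :: "'b topology"
  assumes "countable_sup_property X"
    and "calibre_aleph1 Y"
  shows "countable_sup_property (prod_topology X Y)"
  by (rule dccc_csp, rule dccc_prod[OF csp_dccc[OF assms(1)] assms(2)])

end
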